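(* Let $G$ be a graph such that $|F_e|\le 3$ for every edge $e$ of $G$, and let $u,v,w$ be an induced path on three vertices in $G$, with the sets $B_i$ and $N^{+}(x)$ defined from $u,v,w$ as in the context. Then $|N^{+}(x)|\le 2$ for every $x\in\bigcup_{i\ge 0}B_i$.
   Context: All graphs are finite, simple and undirected. For an edge $e$ of $G$, $F_e$ denotes the set of all edges $e'$ of $G$ such that $V(e)\cup V(e')$ induces a path on three vertices in $G$ (i.e., $e$ and $e'$ share exactly one endpoint and their other endpoints are non-adjacent). Let $u,v,w$ be an induced path on three vertices ($uv,vw\in E(G)$, $uw\notin E(G)$), and let $A=\{u,v,w\}$. Let $B$ be the set of vertices not in $A$ having exactly one or two neighbors in $A$; let $C$ be the set of vertices adjacent to all three vertices of $A$; let $D$ be the set of vertices not in $A\cup B\cup C$ having at least one neighbor in $C$. For $i\ge1$, $B_i$ is the set of vertices $x\notin A\cup B\cup C\cup D$ whose distance in $G$ to the set $B$ is exactly $i$; also $B_0=B$ and $B_{-1}=A$. For $i\ge 0$ and $x\in B_i$, $N^{+}(x)$, $N^{=}(x)$, $N^{-}(x)$ denote the sets of neighbors of $x$ in $B_{i+1}$, $B_i$, $B_{i-1}$ respectively. *)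

theory Defs
  imports Main
begin

definition simple_graph :: "'a set \<Rightarrow> ('a \<Rightarrow> 'a \<Rightarrow> bool) \<Rightarrow> bool" where
  "simple_graph V E \<longleftrightarrow> finite V \<and> (\<forall>x y. E x y \<longrightarrow> x \<in> V \<and> y \<in> V)
     \<and> (\<forall>x y. E x y \<longrightarrow> E y x) \<and> (\<forall>x. \<not> E x x)"

definition edges :: "'a set \<Rightarrow> ('a \<Rightarrow> 'a \<Rightarrow> bool) \<Rightarrow> 'a set set" where
  "edges V E = {{a, b} | a b. a \<in> V \<and> b \<in> V \<and> E a b}"

text \<open>F_e: edges e' sharing exactly one endpoint with e whose other endpoints
 are non-adjacent (so V(e) \<union> V(e') induces P3).\<close>
definition F_set :: "'a set \<Rightarrow> ('a \<Rightarrow> 'a \<Rightarrow> bool) \<Rightarrow> 'a set \<Rightarrow> 'a set set" where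
  "F_set V E e = {e' \<in> edges V E. card (e \<inter> e') = 1 \<and>
      (\<forall>a b. a \<in> e - e' \<longrightarrow> b \<in> e' - e \<longrightarrow> \<not> E a b)}"

text \<open>reach E k x S: there is a walk of length at most k from x to a vertex of S,
 i.e. dist(x,S) \<le> k.\<close>
fun reach :: "('a \<Rightarrow> 'a \<Rightarrow> bool) \<Rightarrow> nat \<Rightarrow> 'a \<Rightarrow> 'a set \<Rightarrow> bool" where
  "reach E 0 x S = (x \<in> S)"
| "reach E (Suc k) x S = (reach E k x S \<or> (\<exists>y. E x y \<and> reach E k y S))"

definition setA :: "'a \<Rightarrow> 'a \<Rightarrow> 'a \<Rightarrow> 'a set" where
  "setA u v w = {u, v, w}"

definition setB :: "'a set \<Rightarrow> ('a \<Rightarrow> 'a \<Rightarrow> bool) \<Rightarrow> 'a \<Rightarrow> 'a \<Rightarrow> 'a \<Rightarrow> 'a set" where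
  "setB V E u v w = {x \<in> V - setA u v w.
      card {a \<in> setA u v w. E x a} = 1 \<or> card {a \<in> setA u v w. E x a} = 2}"

definition setC :: "'a set \<Rightarrow> ('a \<Rightarrow> 'a \<Rightarrow> bool) \<Rightarrow> 'a \<Rightarrow> 'a \<Rightarrow> 'a \<Rightarrow> 'a set" where
  "setC V E u v w = {x \<in> V - setA u v w. E x u \<and> E x v \<and> E x w}"

definition setD :: "'a set \<Rightarrow> ('a \<Rightarrow> 'a \<Rightarrow> bool) \<Rightarrow> 'a \<Rightarrow> 'a \<Rightarrow> 'a \<Rightarrow> 'a set" where
  "setD V E u v w = {x \<in> V - (setA u v w \<union> setB V E u v w \<union> setC V E u v w).
      \<exists>c \<in> setC V E u v w. E x c}"

definition Bset :: "'a set \<Rightarrow> ('a \<Rightarrow> 'a \<Rightarrow> bool) \<Rightarrow> 'a \<Rightarrow> 'a \<Rightarrow> 'a \<Rightarrow> nat \<Rightarrow> 'a set" where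
  "Bset V E u v w i = (if i = 0 then setB V E u v w else
     {x \<in> V - (setA u v w \<union> setB V E u v w \<union> setC V E u v w \<union> setD V E u v w).
        reach E i x (setB V E u v w) \<and> \<not> reach E (i - 1) x (setB V E u v w)})"

definition Nplus :: "'a set \<Rightarrow> ('a \<Rightarrow> 'a \<Rightarrow> bool) \<Rightarrow> 'a \<Rightarrow> 'a \<Rightarrow> 'a \<Rightarrow> nat \<Rightarrow> 'a \<Rightarrow> 'a set" where
  "Nplus V E u v w i x = {y \<in> Bset V E u v w (Suc i). E x y}"

end

theory Submission
  imports Defs
begin

lemma reach_mono: "reach E k x S \<Longrightarrow> k \<le> m \<Longrightarrow> reach E m x S"
proof (induction m arbitrary: x)
  case 0 then show ?case by simp
next
  case (Suc m)
  then show ?case by (cases "k = Suc m") auto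
qed

lemma reach_step: "reach E k z S \<Longrightarrow> z \<notin> S \<Longrightarrow> \<exists>t. E z t \<and> reach E (k - 1) t S"
proof (induction k arbitrary: z)
  case 0 then show ?case by simp
next
  case (Suc k)
  show ?case
  proof (cases "reach E k z S")
    case True
    then obtain t where "E z t" "reach E (k - 1) t S" using Suc by blast
    then show ?thesis using reach_mono[of E "k-1" t S k] by auto
  next
    case False then show ?thesis using Suc.prems by auto
  qed
qed

lemma F_big:
  assumes sg: "simple_graph V E"
    and V: "x \<in> V" "z \<in> V" "t \<in> V" "y1 \<in> V" "y2 \<in> V" "y3 \<in> V"
    and e: "E x z" "E z t" "E x y1" "E x y2" "E x y3"
    and d: "y1 \<noteq> y2" "y1 \<noteq> y3" "y2 \<noteq> y3"
    and zny: "z \<noteq> y1" "z \<noteq> y2" "z \<noteq> y3"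
    and n: "\<not> E z y1" "\<not> E z y2" "\<not> E z y3" "\<not> E x t" "x \<noteq> t"
  shows "card (F_set V E {x, z}) \<ge> 4"
proof -
  have irr: "\<And>a. \<not> E a a" using sg unfolding simple_graph_def by blast
  have xz: "x \<noteq> z" using e irr by metis
  have zy: "z \<noteq> y1" "z \<noteq> y2" "z \<noteq> y3" using zny by auto
  have xy: "x \<noteq> y1" "x \<noteq> y2" "x \<noteq> y3" using e irr by metis+
  have zt: "z \<noteq> t" using e irr by metis
  have fin: "finite (edges V E)"
  proof -
    have "edges V E \<subseteq> Pow V" unfolding edges_def by auto
    moreover have "finite V" using sg unfolding simple_graph_def by blast
    ultimately show ?thesis by (meson finite_Pow_iff finite_subset)
  qed
  have finF: "finite (F_set V E {x, z})" unfolding F_set_def using fin by simp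
  have mem: "{x, y} \<in> F_set V E {x, z}" if "y \<in> V" "E x y" "\<not> E z y" "z \<noteq> y" "x \<noteq> y" for y
  proof -
    have "{x,z} \<inter> {x,y} = {x}" using that by auto
    moreover have "{x,z} - {x,y} = {z}" "{x,y} - {x,z} = {y}" using that xz by auto
    ultimately have "card ({x,z} \<inter> {x,y}) = 1"
      "\<forall>a b. a \<in> {x,z} - {x,y} \<longrightarrow> b \<in> {x,y} - {x,z} \<longrightarrow> \<not> E a b" using that by simp_all
    moreover have "{x,y} \<in> edges V E" unfolding edges_def using that V by blast
    ultimately show ?thesis unfolding F_set_def by blast
  qed
  have memt: "{z, t} \<in> F_set V E {x, z}"
  proof -
    have i: "{x,z} \<inter> {z,t} = {z}" using n xz by auto
    have d1: "{x,z} - {z,t} = {x}" and d2: "{z,t} - {x,z} = {t}" using n xz zt by auto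
    have "card ({x,z} \<inter> {z,t}) = 1" by (simp only: i) simp
    moreover have "\<forall>a b. a \<in> {x,z} - {z,t} \<longrightarrow> b \<in> {z,t} - {x,z} \<longrightarrow> \<not> E a b"
      unfolding d1 d2 using n by blast
    moreover have "{z,t} \<in> edges V E" unfolding edges_def using e V by blast
    ultimately show ?thesis unfolding F_set_def by blast
  qed
  have sub: "{{x,y1},{x,y2},{x,y3},{z,t}} \<subseteq> F_set V E {x, z}"
    using mem[OF V(4) e(3) n(1) zy(1) xy(1)] mem[OF V(5) e(4) n(2) zy(2) xy(2)]
      mem[OF V(6) e(5) n(3) zy(3) xy(3)] memt by blast
  have c4: "card {{x,y1},{x,y2},{x,y3},{z,t}} = 4"
    using d xy n xz by (auto simp: doubleton_eq_iff)
  show ?thesis using card_mono[OF finF sub] c4 by simp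
qed

theorem lemma5:
  fixes V :: "'a set" and E :: "'a \<Rightarrow> 'a \<Rightarrow> bool" and u v w :: 'a
  assumes "simple_graph V E"
    and "\<forall>e \<in> edges V E. card (F_set V E e) \<le> 3"
    and "u \<in> V" "v \<in> V" "w \<in> V" "E u v" "E v w" "\<not> E u w" "u \<noteq> w"
  shows "\<forall>i x. x \<in> Bset V E u v w i \<longrightarrow> card (Nplus V E u v w i x) \<le> 2"
proof (intro allI impI)
  fix i x assume xB: "x \<in> Bset V E u v w i"
  define A where "A = setA u v w"
  define B where "B = setB V E u v w"
  define C where "C = setC V E u v w"
  define D where "D = setD V E u v w"
  have sg: "simple_graph V E" by fact
  have irr: "\<And>a. \<not> E a a" and sym: "\<And>a b. E a b \<Longrightarrow> E b a"
    and inV: "\<And>a b. E a b \<Longrightarrow> a \<in> V \<and> b \<in> V" and finV: "finite V"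
    using sg unfolding simple_graph_def by blast+
  have uv: "u \<noteq> v" "v \<noteq> w" using assms(6,7) irr by metis+
  have A3: "card A = 3" unfolding A_def setA_def using uv assms(9) by auto
  have noA: "\<not> E y a" if "y \<notin> A" "y \<notin> B" "y \<notin> C" "y \<in> V" "a \<in> A" for y a
  proof
    assume ya: "E y a"
    let ?N = "{b \<in> A. E y b}"
    have "?N \<subseteq> A" by auto
    have finA: "finite A" unfolding A_def setA_def by auto
    have "?N \<noteq> {}" using ya that by auto
    hence c1: "card ?N \<ge> 1" using finA by (simp add: Suc_leI card_gt_0_iff)
    have "card ?N \<le> 3" using card_mono[OF finA \<open>?N \<subseteq> A\<close>] A3 by simp
    moreover have "\<not> (card ?N = 1 \<or> card ?N = 2)" using that unfolding B_def setB_def A_def by auto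
    ultimately have "card ?N = card A" using c1 A3 by linarith
    hence "?N = A" using card_subset_eq[OF finA \<open>?N \<subseteq> A\<close>] by simp
    hence "E y u \<and> E y v \<and> E y w" unfolding A_def setA_def by auto
    thus False using that unfolding C_def setC_def A_def by auto
  qed
  have BV: "\<And>j. Bset V E u v w j \<subseteq> V" unfolding Bset_def setB_def by auto
  have ySuc: "y \<notin> A \<and> y \<notin> B \<and> y \<notin> C \<and> y \<in> V \<and> \<not> reach E i y B"
    if "y \<in> Bset V E u v w (Suc i)" for y
    using that unfolding Bset_def A_def B_def C_def by auto
  have yB0: "y \<notin> B" if "\<not> reach E i y B" for y
    using that reach_mono[of E 0 y B i] by auto
  have key: "\<exists>z t. z \<in> V \<and> t \<in> V \<and> E x z \<and> E z t \<and> \<not> E x t \<and> x \<noteq> t \<and>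
      (\<forall>y \<in> Bset V E u v w (Suc i). \<not> E z y \<and> z \<noteq> y)"
  proof (cases "i = 0")
    case True
    hence xB0: "x \<in> B" using xB unfolding Bset_def B_def by simp
    let ?N = "{b \<in> {u,v,w}. E x b}"
    have xnA: "x \<notin> A" and c: "card ?N = 1 \<or> card ?N = 2"
      using xB0 unfolding B_def setB_def A_def setA_def by auto
    have not3: "\<not> (E x u \<and> E x v \<and> E x w)"
    proof
      assume "E x u \<and> E x v \<and> E x w"
      hence "?N = {u,v,w}" by auto
      thus False using c uv assms(9) by auto
    qed
    have some: "E x u \<or> E x v \<or> E x w"
    proof (rule ccontr)
      assume "\<not> ?thesis" hence "?N = {}" by auto
      thus False using c by (simp only: card.empty) simp
    qed
    have zA: "\<forall>y \<in> Bset V E u v w (Suc i). \<not> E z y \<and> z \<noteq> y" if "z \<in> A" for z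
    proof
      fix y assume y: "y \<in> Bset V E u v w (Suc i)"
      have "y \<notin> A" "y \<notin> B" "y \<notin> C" "y \<in> V" using ySuc[OF y] yB0 by auto
      hence "\<not> E y z" "z \<noteq> y" using noA[of y z] that by auto
      thus "\<not> E z y \<and> z \<noteq> y" using sym by blast
    qed
    have xV: "x \<in> V" using xB BV by blast
    have Av: "u \<in> A" "v \<in> A" "w \<in> A" unfolding A_def setA_def by auto
    have xne: "x \<noteq> u" "x \<noteq> v" "x \<noteq> w" using xnA Av by auto
    show ?thesis
    proof (cases "E x v")
      case True
      show ?thesis
      proof (cases "E x u")
        case False
        then show ?thesis using True zA[OF Av(2)] assms(3,4,6) xne sym xV by (intro exI[of _ v] exI[of _ u]) auto
      next
        case tu: True
        hence "\<not> E x w" using True not3 by blast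
        then show ?thesis using True zA[OF Av(2)] assms(4,5,7) xne xV by (intro exI[of _ v] exI[of _ w]) auto
      qed
    next
      case False
      show ?thesis
      proof (cases "E x u")
        case True
        then show ?thesis using False zA[OF Av(1)] assms(3,4,6) xne xV by (intro exI[of _ u] exI[of _ v]) auto
      next
        case f2: False
        hence "E x w" using some False by blast
        then show ?thesis using False zA[OF Av(3)] assms(4,5,7) xne sym xV by (intro exI[of _ w] exI[of _ v]) auto
      qed
    qed
  next
    case False
    then obtain k where k: "i = Suc k" by (cases i) auto
    have xprops: "x \<in> V" "x \<notin> A" "x \<notin> B" "x \<notin> C" "reach E (Suc k) x B" "\<not> reach E k x B"
      using xB False k unfolding Bset_def A_def B_def C_def by auto
    then obtain z where z: "E x z" "reach E k z B" by auto
    have zy: "\<forall>y \<in> Bset V E u v w (Suc i). \<not> E z y \<and> z \<noteq> y"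
    proof (intro ballI conjI notI)
      fix y assume "y \<in> Bset V E u v w (Suc i)" "E z y"
      hence "\<not> reach E i y B" "E y z" using ySuc sym by auto
      moreover have "reach E i y B" using \<open>E y z\<close> z k by auto
      ultimately show False by simp
    next
      fix y assume "y \<in> Bset V E u v w (Suc i)" "z = y"
      hence "\<not> reach E i z B" using ySuc by auto
      moreover have "reach E i z B" using z k reach_mono[of E k z B i] by auto
      ultimately show False by simp
    qed
    show ?thesis
    proof (cases "z \<in> B")
      case True
      hence "card {a \<in> A. E z a} \<noteq> 0" unfolding B_def setB_def A_def by auto
      hence "{a \<in> A. E z a} \<noteq> {}" by (metis card.empty)
      then obtain a where a: "a \<in> A" "E z a" by auto
      have "\<not> E x a" using noA xprops a by blast
      moreover have "x \<noteq> a" using a xprops by auto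
      ultimately show ?thesis using z zy a inV by blast
    next
      case zB: False
      then obtain t where t: "E z t" "reach E (k - 1) t B" using reach_step z by metis
      have k0: "k \<noteq> 0" using zB z by (cases k) auto
      have "\<not> E x t"
      proof
        assume "E x t"
        hence "reach E (Suc (k - 1)) x B" using t by auto
        thus False using xprops k0 by simp
      qed
      moreover have "x \<noteq> t"
      proof
        assume "x = t"
        hence "reach E k x B" using t reach_mono[of E "k-1" t B k] by auto
        thus False using xprops by simp
      qed
      ultimately show ?thesis using z zy t inV by blast
    qed
  qed
  then obtain z t where zt: "z \<in> V" "t \<in> V" "E x z" "E z t" "\<not> E x t" "x \<noteq> t"
      "\<forall>y \<in> Bset V E u v w (Suc i). \<not> E z y \<and> z \<noteq> y" by blast
  show "card (Nplus V E u v w i x) \<le> 2"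
  proof (rule ccontr)
    assume "\<not> ?thesis"
    hence "card (Nplus V E u v w i x) \<ge> 3" by simp
    then obtain S where S: "S \<subseteq> Nplus V E u v w i x" "card S = 3"
      by (meson obtain_subset_with_card_n)
    then obtain y1 y2 y3 where S3: "S = {y1,y2,y3}" "y1 \<noteq> y2" "y2 \<noteq> y3" "y1 \<noteq> y3"
      by (auto simp: card_3_iff)
    have ys: "y \<in> Bset V E u v w (Suc i) \<and> E x y" if "y \<in> S" for y
      using that S unfolding Nplus_def by auto
    have xV: "x \<in> V" using xB BV by blast
    have "card (F_set V E {x, z}) \<ge> 4"
      apply (rule F_big[OF sg xV zt(1,2), of y1 y2 y3])
      using ys S3 BV zt by auto
    moreover have "{x, z} \<in> edges V E" unfolding edges_def using zt xV by auto
    ultimately show False using assms(2) by fastforce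
  qed
qed

end
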